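(* Let $R$ be a ring with identity and involution $*$, and let $a\in R$. The following are equivalent: (1) $a$ is core invertible; (2) $a$ is group invertible and there exists $x\in R$ such that $(ax)^*=ax$ and $xa^2=a$; (3) $a$ is group invertible and there exists $x\in R$ such that $(ax)^*=ax$ and $xa=a^{\#}a$.
   Context: An involution on $R$ satisfies $(a^* )^*=a$, $(ab)^*=b^*a^*$, $(a+b)^*=a^*+b^*$. An element $x\in R$ is a core inverse of $a$ if $axa=a$, $xR=aR$ and $Rx=Ra^*$; $a$ is core invertible if such $x$ exists. The group inverse $a^{\#}$ of $a$ is the (unique) $b$ with $aba=a$, $bab=b$, $ab=ba$; $a$ is group invertible if it exists. *)

theory Defs
  imports Main
begin

definition involution :: "('a::ring_1 \<Rightarrow> 'a) \<Rightarrow> bool" where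
  "involution s \<longleftrightarrow> (\<forall>a. s (s a) = a) \<and> (\<forall>a b. s (a * b) = s b * s a)
      \<and> (\<forall>a b. s (a + b) = s a + s b)"

definition right_ideal :: "'a::ring_1 \<Rightarrow> 'a set" where
  "right_ideal x = {x * r | r. True}"

definition left_ideal :: "'a::ring_1 \<Rightarrow> 'a set" where
  "left_ideal x = {r * x | r. True}"

definition is_core_inverse :: "('a::ring_1 \<Rightarrow> 'a) \<Rightarrow> 'a \<Rightarrow> 'a \<Rightarrow> bool" where
  "is_core_inverse s a x \<longleftrightarrow> a * x * a = a \<and> right_ideal x = right_ideal a
      \<and> left_ideal x = left_ideal (s a)"

definition core_invertible :: "('a::ring_1 \<Rightarrow> 'a) \<Rightarrow> 'a \<Rightarrow> bool" where
  "core_invertible s a \<longleftrightarrow> (\<exists>x. is_core_inverse s a x)"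

definition is_group_inverse :: "'a::ring_1 \<Rightarrow> 'a \<Rightarrow> bool" where
  "is_group_inverse a b \<longleftrightarrow> a * b * a = a \<and> b * a * b = b \<and> a * b = b * a"

definition group_invertible :: "'a::ring_1 \<Rightarrow> bool" where
  "group_invertible a \<longleftrightarrow> (\<exists>b. is_group_inverse a b)"

definition group_inverse :: "'a::ring_1 \<Rightarrow> 'a" where
  "group_inverse a = (THE b. is_group_inverse a b)"

end

theory Submission
  imports Defs
begin

lemma gi_unique:
  fixes a b c :: "'a::ring_1"
  assumes "is_group_inverse a b" "is_group_inverse a c"
  shows "b = c"
proof -
  have b1: "a*b*a = a" "b*a*b = b" "a*b = b*a" and c1: "a*c*a = a" "c*a*c = c" "a*c = c*a"
    using assms unfolding is_group_inverse_def by auto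
  have "a*b = (a*c*a)*b" by (simp only: c1(1))
  also have "\<dots> = (c*a)*(a*b)" by (simp only: c1(3) mult.assoc)
  also have "\<dots> = c*a*(b*a)" by (simp only: b1(3))
  also have "\<dots> = c*(a*b*a)" by (simp only: mult.assoc)
  also have "\<dots> = c*a" by (simp only: b1(1))
  finally have e: "a*b = a*c" by (simp only: c1(3))
  have "b = b*(a*b)" by (simp only: b1(2) mult.assoc[symmetric])
  also have "\<dots> = (b*a)*c" by (simp only: e mult.assoc)
  also have "\<dots> = (a*c)*c" by (simp only: e b1(3)[symmetric])
  also have "\<dots> = (c*a)*c" by (simp only: c1(3))
  also have "\<dots> = c" by (simp only: c1(2))
  finally show ?thesis .
qed

lemma gi_the:
  assumes "is_group_inverse (a::'a::ring_1) b"
  shows "group_inverse a = b"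
  unfolding group_inverse_def using assms gi_unique by blast

lemma core_props:
  fixes a x :: "'a::ring_1"
  assumes inv: "involution s" and c: "is_core_inverse s a x"
  shows "s (a*x) = a*x" "x*a^2 = a" "is_group_inverse a (x*x*a)"
proof -
  have ss: "\<And>u. s (s u) = u" and sm: "\<And>u v. s (u*v) = s v * s u"
    using inv unfolding involution_def by auto
  have axa: "a*x*a = a" and r: "right_ideal x = right_ideal a" and l: "left_ideal x = left_ideal (s a)"
    using c unfolding is_core_inverse_def by auto
  have "x \<in> right_ideal x" unfolding right_ideal_def by (rule CollectI, rule exI[of _ 1], simp)
  then obtain t where t: "x = a*t" using r unfolding right_ideal_def by auto
  have "a \<in> right_ideal a" unfolding right_ideal_def by (rule CollectI, rule exI[of _ 1], simp)
  then obtain rr where rr: "a = x*rr" using r unfolding right_ideal_def by auto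
  have "x \<in> left_ideal x" unfolding left_ideal_def by (rule CollectI, rule exI[of _ 1], simp)
  then obtain p where p: "x = p * s a" using l unfolding left_ideal_def by auto
  have axx: "a*x*x = x"
  proof -
    have "a*x*x = a*x*(a*t)" by (simp only: t[symmetric])
    also have "\<dots> = (a*x*a)*t" by (simp only: mult.assoc)
    also have "\<dots> = a*t" by (simp only: axa)
    finally show ?thesis using t by simp
  qed
  have sa: "s a = s a * s x * s a"
  proof -
    have "s a = s (a*x*a)" by (simp only: axa)
    also have "\<dots> = s a * s x * s a" by (simp add: sm mult.assoc)
    finally show ?thesis .
  qed
  have x1: "x = x * s (a*x)"
  proof -
    have "x = p * s a" by (rule p)
    also have "\<dots> = p * (s a * s x * s a)" by (simp only: sa[symmetric])
    also have "\<dots> = (p * s a) * (s x * s a)" by (simp only: mult.assoc)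
    also have "\<dots> = x * (s x * s a)" by (simp only: p[symmetric])
    also have "\<dots> = x * s (a*x)" by (simp only: sm)
    finally show ?thesis .
  qed
  have herm0: "a*x = a*x * s (a*x)"
  proof -
    have "a*x = a*(x * s (a*x))" using x1 by simp
    also have "\<dots> = a*x * s (a*x)" by (simp only: mult.assoc)
    finally show ?thesis .
  qed
  show herm: "s (a*x) = a*x"
  proof -
    have "s (a*x) = s (a*x * s (a*x))" using herm0 by simp
    also have "\<dots> = s (s (a*x)) * s (a*x)" by (simp only: sm)
    also have "\<dots> = a*x * s (a*x)" by (simp only: ss)
    finally show ?thesis using herm0 by simp
  qed
  have xax: "x*a*x = x"
  proof -
    have "x = x * (a*x)" using x1 herm by simp
    thus ?thesis by (simp only: mult.assoc)
  qed
  show xaa: "x*a^2 = a"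
  proof -
    have "x*a^2 = x*a*(x*rr)" by (simp only: power2_eq_square mult.assoc rr[symmetric])
    also have "\<dots> = (x*a*x)*rr" by (simp only: mult.assoc)
    also have "\<dots> = x*rr" by (simp only: xax)
    finally show ?thesis using rr by simp
  qed
  have e1: "a*(x*x*a) = x*a"
  proof -
    have "a*(x*x*a) = (a*x*x)*a" by (simp only: mult.assoc)
    thus ?thesis by (simp only: axx)
  qed
  have e2: "(x*x*a)*a = x*a"
  proof -
    have "(x*x*a)*a = x*(x*a^2)" by (simp only: power2_eq_square mult.assoc)
    thus ?thesis by (simp only: xaa)
  qed
  show "is_group_inverse a (x*x*a)"
    unfolding is_group_inverse_def
  proof (intro conjI)
    have "a * (x * x * a) * a = x*a*a" by (simp only: e1)
    also have "\<dots> = x*a^2" by (simp only: power2_eq_square mult.assoc)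
    finally show "a * (x * x * a) * a = a" by (simp only: xaa)
    have "x * x * a * a * (x * x * a) = x*a*(x*x*a)" by (simp only: e2)
    also have "\<dots> = (x*a*x)*x*a" by (simp only: mult.assoc)
    also have "\<dots> = x*x*a" by (simp only: xax)
    finally show "x * x * a * a * (x * x * a) = x * x * a" .
    show "a * (x * x * a) = x * x * a * a" by (simp only: e1 e2)
  qed
qed

lemma to_core:
  fixes a x g :: "'a::ring_1"
  assumes inv: "involution s" and g: "is_group_inverse a g"
    and h: "s (a*x) = a*x" and xaa: "x*a^2 = a"
  shows "is_core_inverse s a (g*a*x)"
proof -
  have ss: "\<And>u. s (s u) = u" and sm: "\<And>u v. s (u*v) = s v * s u"
    using inv unfolding involution_def by auto
  have g1: "a*g*a = a" "g*a*g = g" "a*g = g*a" using g unfolding is_group_inverse_def by auto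
  have xa: "x*a = a*g"
  proof -
    have "x*a = x*(a*g*a)" by (simp only: g1(1))
    also have "\<dots> = x*(a*(g*a))" by (simp only: mult.assoc)
    also have "\<dots> = x*(a*(a*g))" by (simp only: g1(3))
    also have "\<dots> = x*a^2*g" by (simp only: power2_eq_square mult.assoc)
    also have "\<dots> = a*g" by (simp only: xaa)
    finally show ?thesis .
  qed
  have axa: "a*x*a = a"
  proof -
    have "a*x*a = a*(x*a)" by (simp only: mult.assoc)
    also have "\<dots> = a*(a*g)" by (simp only: xa)
    also have "\<dots> = a*(g*a)" by (simp only: g1(3))
    also have "\<dots> = a*g*a" by (simp only: mult.assoc)
    also have "\<dots> = a" by (simp only: g1(1))
    finally show ?thesis .
  qed
  define y where "y = g*a*x"
  have aya: "a*y*a = a"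
  proof -
    have "a*y*a = (a*g*a)*x*a" unfolding y_def by (simp only: mult.assoc)
    also have "\<dots> = a*x*a" by (simp only: g1(1))
    finally show ?thesis using axa by simp
  qed
  have ya: "y*a = g*a"
  proof -
    have "y*a = g*(a*x*a)" unfolding y_def by (simp only: mult.assoc)
    thus ?thesis by (simp only: axa)
  qed
  have ay: "a*y = a*x"
  proof -
    have "a*y = (a*g*a)*x" unfolding y_def by (simp only: mult.assoc)
    thus ?thesis by (simp only: g1(1))
  qed
  have yaa: "y*a*a = a"
  proof -
    have "y*a*a = g*a*a" by (simp only: ya)
    also have "\<dots> = a*g*a" by (simp only: g1(3)[symmetric])
    also have "\<dots> = a" by (simp only: g1(1))
    finally show ?thesis .
  qed
  have y2: "y = a*(g*x)"
  proof -
    have "y = (g*a)*x" unfolding y_def by simp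
    also have "\<dots> = (a*g)*x" by (simp only: g1(3)[symmetric])
    finally show ?thesis by (simp only: mult.assoc)
  qed
  have R1: "right_ideal y = right_ideal a"
    unfolding right_ideal_def
  proof (intro set_eqI iffI)
    fix z assume "z \<in> {y * r |r. True}"
    then obtain r where zr: "z = y*r" by auto
    have "y*r = a*(g*x*r)" by (simp only: y2 mult.assoc)
    thus "z \<in> {a * r |r. True}" using zr by auto
  next
    fix z assume "z \<in> {a * r |r. True}"
    then obtain r where zr: "z = a*r" by auto
    have "y*(a*a*r) = (y*a*a)*r" by (simp only: mult.assoc)
    also have "\<dots> = a*r" by (simp only: yaa)
    finally show "z \<in> {y * r |r. True}" using zr by (metis (mono_tags, lifting) mem_Collect_eq)
  qed
  have y3: "y = (g * s x) * s a"
  proof -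
    have "y = g*(a*x)" unfolding y_def by (simp only: mult.assoc)
    also have "\<dots> = g*s (a*x)" by (simp only: h)
    also have "\<dots> = g*(s x * s a)" by (simp only: sm)
    finally show ?thesis by (simp only: mult.assoc)
  qed
  have sa: "s a = (s a * a) * y"
  proof -
    have "s a = s (a*x*a)" by (simp only: axa)
    also have "\<dots> = s a * s (a*x)" by (simp only: sm mult.assoc)
    also have "\<dots> = s a * (a*x)" by (simp only: h)
    also have "\<dots> = s a * (a*y)" by (simp only: ay)
    finally show ?thesis by (simp only: mult.assoc)
  qed
  have L1: "left_ideal y = left_ideal (s a)"
    unfolding left_ideal_def
  proof (intro set_eqI iffI)
    fix z assume "z \<in> {r * y |r. True}"
    then obtain r where zr: "z = r*y" by auto
    have "r*y = (r*(g * s x)) * s a" by (simp only: y3 mult.assoc)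
    thus "z \<in> {r * s a |r. True}" using zr by auto
  next
    fix z assume "z \<in> {r * s a |r. True}"
    then obtain r where zr: "z = r * s a" by auto
    have "(r*(s a * a))*y = r*((s a * a)*y)" by (simp only: mult.assoc)
    also have "\<dots> = r * s a" by (simp only: sa[symmetric])
    finally show "z \<in> {r * y |r. True}" using zr by (metis (mono_tags, lifting) mem_Collect_eq)
  qed
  show ?thesis unfolding is_core_inverse_def using aya R1 L1 y_def by simp
qed

theorem corollary2p7:
  fixes s :: "'a::ring_1 \<Rightarrow> 'a" and a :: 'a
  assumes "involution s"
  shows "(core_invertible s a \<longleftrightarrow>
           (group_invertible a \<and> (\<exists>x. s (a * x) = a * x \<and> x * a ^ 2 = a)))
       \<and> (core_invertible s a \<longleftrightarrow>
           (group_invertible a \<and> (\<exists>x. s (a * x) = a * x \<and> x * a = group_inverse a * a)))"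
proof -
  have A: "core_invertible s a \<Longrightarrow> group_invertible a \<and> (\<exists>x. s (a * x) = a * x \<and> x * a ^ 2 = a) \<and>
     (\<exists>x. s (a * x) = a * x \<and> x * a = group_inverse a * a)"
  proof -
    assume "core_invertible s a"
    then obtain x where c: "is_core_inverse s a x" unfolding core_invertible_def by auto
    note P = core_props[OF assms c]
    have gi: "group_inverse a = x*x*a" using gi_the P(3) .
    have "x*x*a*a = x*a" using P(2) by (simp only: power2_eq_square mult.assoc)
    hence "x*a = group_inverse a * a" using gi by simp
    thus ?thesis using P unfolding group_invertible_def by auto
  qed
  have B: "group_invertible a \<Longrightarrow> s (a * x) = a * x \<Longrightarrow> x * a ^ 2 = a \<Longrightarrow> core_invertible s a" for x
    unfolding group_invertible_def core_invertible_def using to_core[OF assms] by blast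
  have C: "group_invertible a \<Longrightarrow> x * a = group_inverse a * a \<Longrightarrow> x * a ^ 2 = a" for x
  proof -
    assume "group_invertible a" "x * a = group_inverse a * a"
    then obtain g where g: "is_group_inverse a g" unfolding group_invertible_def by auto
    have g1: "a*g*a = a" "a*g = g*a" using g unfolding is_group_inverse_def by auto
    have "group_inverse a = g" using g by (rule gi_the)
    hence xg: "x*a = g*a" using \<open>x * a = group_inverse a * a\<close> by simp
    have "x*a^2 = (x*a)*a" by (simp only: power2_eq_square mult.assoc)
    also have "\<dots> = g*a*a" by (simp only: xg)
    also have "\<dots> = a*g*a" by (simp only: g1(2)[symmetric])
    also have "\<dots> = a" by (simp only: g1(1))
    finally show ?thesis .
  qed
  show ?thesis using A B C by blast
qed

end
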